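(* Let $\mathbb{F}$ be a field with $\mathrm{char}(\mathbb{F})\neq 2$ and let $L$ be a finite-dimensional Lie algebra over $\mathbb{F}$. If $b(L)\leq 1$, then $L$ is solvable.
   Context: For $x\in L$, $b(x)=\mathrm{rank}(\mathrm{ad}_x)$ and the breadth of $L$ is $b(L)=\max\{b(x)\mid x\in L\}$. *)

theory Defs
  imports Complex_Main
begin

text \<open>A Lie algebra over the field 'k is modelled as the whole type 'v
  (an abelian group) with a scalar multiplication scale making it a vector
  space over 'k, and a bracket br that is bilinear, alternating and
  satisfies the Jacobi identity.\<close>

definition lie_algebra :: "('k::field \<Rightarrow> 'v::ab_group_add \<Rightarrow> 'v) \<Rightarrow> ('v \<Rightarrow> 'v \<Rightarrow> 'v) \<Rightarrow> bool" where
  "lie_algebra scale br \<longleftrightarrow>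
     vector_space scale \<and>
     (\<forall>x. Vector_Spaces.linear scale scale (br x)) \<and>
     (\<forall>y. Vector_Spaces.linear scale scale (\<lambda>x. br x y)) \<and>
     (\<forall>x. br x x = 0) \<and>
     (\<forall>x y z. br x (br y z) + br y (br z x) + br z (br x y) = 0)"

definition finite_dim :: "('k::field \<Rightarrow> 'v::ab_group_add \<Rightarrow> 'v) \<Rightarrow> bool" where
  "finite_dim scale \<longleftrightarrow> (\<exists>S. finite S \<and> module.span scale S = UNIV)"

definition elem_breadth :: "('k::field \<Rightarrow> 'v::ab_group_add \<Rightarrow> 'v) \<Rightarrow> ('v \<Rightarrow> 'v \<Rightarrow> 'v) \<Rightarrow> 'v \<Rightarrow> nat" where
  "elem_breadth scale br x = vector_space.dim scale (range (br x))"

definition breadth :: "('k::field \<Rightarrow> 'v::ab_group_add \<Rightarrow> 'v) \<Rightarrow> ('v \<Rightarrow> 'v \<Rightarrow> 'v) \<Rightarrow> nat" where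
  "breadth scale br = Max (range (elem_breadth scale br))"

primrec derived_series :: "('k::field \<Rightarrow> 'v::ab_group_add \<Rightarrow> 'v) \<Rightarrow> ('v \<Rightarrow> 'v \<Rightarrow> 'v) \<Rightarrow> nat \<Rightarrow> 'v set" where
  "derived_series scale br 0 = UNIV"
| "derived_series scale br (Suc n) =
     module.span scale {br x y | x y. x \<in> derived_series scale br n \<and> y \<in> derived_series scale br n}"

definition solvable_lie :: "('k::field \<Rightarrow> 'v::ab_group_add \<Rightarrow> 'v) \<Rightarrow> ('v \<Rightarrow> 'v \<Rightarrow> 'v) \<Rightarrow> bool" where
  "solvable_lie scale br \<longleftrightarrow> (\<exists>n. derived_series scale br n = {0})"

end

theory Submission
  imports Defs
begin

lemma fd_interp:
  assumes "vector_space scale" "finite_dim scale"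
  obtains B where "finite_dimensional_vector_space scale B"
proof -
  interpret vector_space scale by fact
  obtain S where S: "finite S" "span S = UNIV" using assms(2) unfolding finite_dim_def by blast
  obtain B where B: "independent B" "UNIV \<subseteq> span B"
    using maximal_independent_subset[of UNIV] by blast
  have "finite B" using independent_span_bound[OF S(1) B(1)] S(2) by auto
  then have "finite_dimensional_vector_space scale B"
    using B by unfold_locales auto
  then show ?thesis using that by blast
qed

lemma (in finite_dimensional_vector_space) dim_le1_span:
  assumes "dim R \<le> 1" "u \<in> R" "u \<noteq> 0" "w \<in> R"
  shows "w \<in> span {u}"
proof (rule ccontr)
  assume nw: "w \<notin> span {u}"
  have "independent {u}" using assms(3)
    using independent_insertI[of u "{}"] by simp
  then have "independent {w, u}" using nw independent_insertI by blast
  moreover have "w \<noteq> u" using nw span_base by blast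
  ultimately have "card {w,u} \<le> dim R" using independent_card_le_dim[of "{w,u}" R] assms by auto
  with \<open>w \<noteq> u\<close> assms(1) show False by simp
qed

context
  fixes scale :: "'k::field \<Rightarrow> 'v::ab_group_add \<Rightarrow> 'v"
    and br :: "'v \<Rightarrow> 'v \<Rightarrow> 'v"
    and B
  assumes L: "lie_algebra scale br"
    and FD: "finite_dimensional_vector_space scale B"
    and BR: "\<And>x. elem_breadth scale br x \<le> 1"
begin

interpretation finite_dimensional_vector_space scale B by (rule FD)

lemma addL: "br (a + b) c = br a c + br b c"
  using L unfolding lie_algebra_def Vector_Spaces.linear_iff by auto
lemma addR: "br c (a + b) = br c a + br c b"
  using L unfolding lie_algebra_def Vector_Spaces.linear_iff by auto
lemma scL: "br (scale k a) c = scale k (br a c)"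
  using L unfolding lie_algebra_def Vector_Spaces.linear_iff by auto
lemma scR: "br c (scale k a) = scale k (br c a)"
  using L unfolding lie_algebra_def Vector_Spaces.linear_iff by auto
lemma alt: "br a a = 0"
  using L unfolding lie_algebra_def by auto
lemma jac: "br x (br y z) + br y (br z x) + br z (br x y) = 0"
  using L unfolding lie_algebra_def by auto
lemma zeroL: "br 0 c = 0"
  using scL[of 0 0 c] by simp
lemma negL: "br (- a) c = - br a c"
proof -
  have "br (- a) c + br a c = 0" using addL[of "-a" a c] zeroL by simp
  then show ?thesis by (simp add: eq_neg_iff_add_eq_0)
qed
lemma anti: "br a b = - br b a"
proof -
  have e: "br (a+b) (a+b) = br a a + br b a + (br a b + br b b)" by (simp only: addL addR)
  have "0 = br b a + br a b" using e by (simp only: alt add_0_left add_0_right)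
  then have "br b a + br a b = 0" by (rule sym)
  then show ?thesis by (simp only: add_eq_0_iff)
qed

lemma zeroR: "br a 0 = 0"
  using anti[of a 0] zeroL by simp

lemma range_sub: assumes "u = br x y" "u \<noteq> 0" shows "br x z \<in> span {u}"
proof -
  have "dim (range (br x)) \<le> 1" using BR[of x] unfolding elem_breadth_def by simp
  then show ?thesis using dim_le1_span[of "range (br x)" u "br x z"] assms by auto
qed

lemma adu: assumes "u = br x y" "u \<noteq> 0" shows "br u z \<in> span {u}"
proof -
  have 1: "br x (br y z) \<in> span {u}" using range_sub assms by blast
  have "u = br y (- x)" using assms(1) by (simp add: anti[of y "-x"] negL)
  then have 2: "br y (br z x) \<in> span {u}" using range_sub assms by blast
  have "br z u = - (br x (br y z) + br y (br z x))" using jac[of x y z] assms(1)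
    by (simp only: add_eq_0_iff)
  then have "br u z = br x (br y z) + br y (br z x)" using anti[of u z] by simp
  then show ?thesis using 1 2 span_add by simp
qed

lemma brbr: "br (br x y) (br z w) = 0"
proof (cases "br x y = 0 \<or> br z w = 0")
  case True then show ?thesis using zeroL zeroR by auto
next
  case False
  define u where "u = br x y"
  define v where "v = br z w"
  have "br u v \<in> span {u}" using adu False u_def by blast
  then obtain a where a: "br u v = scale a u" by (auto simp: span_singleton)
  have "br v u \<in> span {v}" using adu False v_def by blast
  then obtain b where b: "br v u = scale b v" by (auto simp: span_singleton)
  show ?thesis
  proof (cases "a = 0")
    case True then show ?thesis using a u_def v_def by simp
  next
    case False
    have "scale a u = scale (-b) v" using a b anti[of u v] by simp
    then have "scale (inverse a) (scale a u) = scale (inverse a) (scale (-b) v)" by simp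
    then have "u = scale (inverse a * -b) v" using False by (simp add: scale_scale)
    then have "br u v = scale (inverse a * -b) (br v v)" by (simp add: negL scL)
    then show ?thesis using u_def v_def alt by simp
  qed
qed

lemma solv: "solvable_lie scale br"
proof -
  let ?P = "{br x y | x y. x \<in> (UNIV::'v set) \<and> y \<in> UNIV}"
  have D1: "derived_series scale br 1 = span ?P" by simp
  have sub1: "subspace {a. \<forall>q\<in>?P. br a q = 0}"
    unfolding subspace_def using zeroL by (auto simp: addL scL)
  have P1: "?P \<subseteq> {a. \<forall>q\<in>?P. br a q = 0}" using brbr by auto
  have s1: "\<forall>q\<in>?P. br a q = 0" if "a \<in> span ?P" for a
    using span_minimal[OF P1 sub1] that by auto
  have s2: "br a b = 0" if "a \<in> span ?P" "b \<in> span ?P" for a b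
  proof -
    have sub2: "subspace {b. br a b = 0}"
      unfolding subspace_def by (auto simp: addR scR zeroR)
    have P2: "?P \<subseteq> {b. br a b = 0}" using s1 that(1) by auto
    show ?thesis using span_minimal[OF P2 sub2] that(2) by auto
  qed
  have "derived_series scale br 2 = span {br a b | a b. a \<in> span ?P \<and> b \<in> span ?P}"
    by (simp add: numeral_2_eq_2)
  also have "{br a b | a b. a \<in> span ?P \<and> b \<in> span ?P} \<subseteq> {0}" using s2 by auto
  then have "span {br a b | a b. a \<in> span ?P \<and> b \<in> span ?P} \<subseteq> span {0}"
    by (rule span_mono)
  then have "span {br a b | a b. a \<in> span ?P \<and> b \<in> span ?P} = {0}"
    using span_zero[of "{br a b | a b. a \<in> span ?P \<and> b \<in> span ?P}"] by auto
  finally show ?thesis unfolding solvable_lie_def by blast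
qed

end

theorem proposition2p4:
  fixes scale :: "'k::field \<Rightarrow> 'v::ab_group_add \<Rightarrow> 'v"
    and br :: "'v \<Rightarrow> 'v \<Rightarrow> 'v"
  assumes "(2::'k) \<noteq> 0"
    and "lie_algebra scale br"
    and "finite_dim scale"
    and "breadth scale br \<le> 1"
  shows "solvable_lie scale br"
proof -
  have vs: "vector_space scale" using assms(2) unfolding lie_algebra_def by blast
  obtain B where FD: "finite_dimensional_vector_space scale B" using fd_interp[OF vs assms(3)] by blast
  interpret finite_dimensional_vector_space scale B by (rule FD)
  have fin: "finite (range (elem_breadth scale br))"
    by (rule finite_subset[of _ "{..dimension}"]) (auto simp: elem_breadth_def dim_subset_UNIV)
  have "\<And>x. elem_breadth scale br x \<le> 1"
    using Max_ge[OF fin] assms(4) unfolding breadth_def by (meson le_trans rangeI)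
  then show ?thesis using solv[OF assms(2) FD] by blast
qed

end
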